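(* Let $\mathbf{y}\in\mathbb{R}^n$ with $\sum_i y_i=0$, and let $\mathbf{X}\in\mathbb{R}^{n\times p}$ have centered columns with $\frac1n\sum_i x_{ij}^2=1$, whose $p$ columns are partitioned into $G$ non-overlapping groups, group $g$ having $W_g$ columns forming the submatrix $\mathbf{X}_g\in\mathbb{R}^{n\times W_g}$, and assume $\frac1n\mathbf{X}_g^T\mathbf{X}_g=\mathbf{I}$ for all $g=1,\ldots,G$. For $\lambda>0$ let $$\widehat{\boldsymbol\beta}(\lambda)=\operatorname*{argmin}_{\boldsymbol\beta\in\mathbb{R}^p}\ \frac{1}{2n}\Big\|\mathbf{y}-\sum_{g=1}^G\mathbf{X}_g\boldsymbol\beta_g\Big\|^2+\lambda\sum_{g=1}^G\sqrt{W_g}\|\boldsymbol\beta_g\|,$$ where $\boldsymbol\beta=(\boldsymbol\beta_1^T,\ldots,\boldsymbol\beta_G^T)^T$ with $\boldsymbol\beta_g\in\mathbb{R}^{W_g}$. Let $\lambda_m=\max_g\frac{\|\mathbf{X}_g^T\mathbf{y}\|}{n\sqrt{W_g}}$, let $\mathbf{X}_*$ be the submatrix of a group attaining this maximum and $W_*$ its number of columns, and let $\bar{\mathbf{v}}=\mathbf{X}_*\mathbf{X}_*^T\mathbf{y}$. Then for any $\lambda\in(0,\lambda_m]$ and $g=1,\ldots,G$, we have $\widehat{\boldsymbol\beta}_g(\lambda)=\mathbf{0}$ if $$\sqrt{(\lambda+\lambda_m)^2\|\mathbf{X}_g^T\mathbf{y}\|^2-\frac{2(\lambda_m^2-\lam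bda^2)\,\mathbf{y}^T\mathbf{X}_g\mathbf{X}_g^T\bar{\mathbf{v}}}{n}+\frac{(\lambda_m-\lambda)^2\|\mathbf{X}_g^T\bar{\mathbf{v}}\|^2}{n^2}}<2n\lambda\lambda_m\sqrt{W_g}-(\lambda_m-\lambda)\sqrt{n\|\mathbf{y}\|^2-n^2\lambda_m^2W_*}.$$
   Context: $\|\cdot\|$ denotes the Euclidean norm of a vector; $\widehat{\boldsymbol\beta}_g(\lambda)$ is the block of the group lasso solution corresponding to group $g$. *)

theory Defs
  imports "HOL-Analysis.Analysis"
begin

text \<open>Groups are given by a map grp from column indices to group labels.
  grp_block grp g v is the block v_g of v, embedded in R^p with zeros outside group g
  (so its Euclidean norm is the norm of the block).\<close>

definition grp_block :: "('p \<Rightarrow> 'g) \<Rightarrow> 'g \<Rightarrow> real ^ 'p \<Rightarrow> real ^ 'p" where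
  "grp_block grp g v = (\<chi> j. if grp j = g then v $ j else 0)"

definition grp_size :: "('p::finite \<Rightarrow> 'g) \<Rightarrow> 'g \<Rightarrow> nat" where
  "grp_size grp g = card {j. grp j = g}"

definition group_lasso_obj ::
  "real ^ 'p ^ 'n \<Rightarrow> real ^ 'n \<Rightarrow> ('p::finite \<Rightarrow> 'g::finite) \<Rightarrow> real \<Rightarrow> real ^ 'p \<Rightarrow> real" where
  "group_lasso_obj X y grp lam \<beta> =
     (1 / (2 * real CARD('n))) * (norm (y - (\<Sum>g\<in>UNIV. X *v grp_block grp g \<beta>)))\<^sup>2
     + lam * (\<Sum>g\<in>UNIV. sqrt (real (grp_size grp g)) * norm (grp_block grp g \<beta>))"

definition is_group_lasso_sol ::
  "real ^ 'p ^ 'n \<Rightarrow> real ^ 'n \<Rightarrow> ('p::finite \<Rightarrow> 'g::finite) \<Rightarrow> real \<Rightarrow> real ^ 'p \<Rightarrow> bool" where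
  "is_group_lasso_sol X y grp lam \<beta> \<longleftrightarrow>
     (\<forall>\<beta>'. group_lasso_obj X y grp lam \<beta> \<le> group_lasso_obj X y grp lam \<beta>')"

definition lambda_max ::
  "real ^ 'p ^ 'n \<Rightarrow> real ^ 'n \<Rightarrow> ('p::finite \<Rightarrow> 'g::finite) \<Rightarrow> real" where
  "lambda_max X y grp =
     Max ((\<lambda>g. norm (grp_block grp g (transpose X *v y))
               / (real CARD('n) * sqrt (real (grp_size grp g)))) ` UNIV)"

end

theory Submission
  imports Defs
begin

declare transpose_matrix_vector[simp del]

lemma mv_inner: "((A::real^'p^'n) *v x) \<bullet> z = x \<bullet> (transpose A *v z)"
  by (simp add: inner_vec_def matrix_vector_mult_def transpose_def sum_distrib_left sum_distrib_right
      mult_ac) (rule sum.swap)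

lemma mv_add: "(A::real^'p^'n) *v (a + b) = A *v a + A *v b"
  by (simp add: matrix_vector_right_distrib)
lemma mv_diff: "(A::real^'p^'n) *v (a - b) = A *v a - A *v b"
  by (simp add: vec_eq_iff matrix_vector_mult_def sum_subtractf algebra_simps)
lemma mv_scale: "(A::real^'p^'n) *v (c *\<^sub>R a) = c *\<^sub>R (A *v a)"
  by (simp add: vec_eq_iff matrix_vector_mult_def sum_distrib_left algebra_simps)
lemma mv_sum: "(A::real^'p^'n) *v (\<Sum>g\<in>S. f g) = (\<Sum>g\<in>S. A *v f g)"
  by (induction S rule: infinite_finite_induct) (auto simp: mv_add)

lemma gb_add: "grp_block grp g (a + b) = grp_block grp g a + grp_block grp g b"
  by (simp add: grp_block_def vec_eq_iff)
lemma gb_diff: "grp_block grp g (a - b) = grp_block grp g a - grp_block grp g b"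
  by (simp add: grp_block_def vec_eq_iff)
lemma gb_scale: "grp_block grp g (c *\<^sub>R a) = c *\<^sub>R grp_block grp g a"
  by (simp add: grp_block_def vec_eq_iff)
lemma gb_idem: "grp_block grp g (grp_block grp h v) = (if g = h then grp_block grp h v else 0)"
  by (simp add: grp_block_def vec_eq_iff)
lemma gb_inner: "grp_block grp g a \<bullet> b = grp_block grp g a \<bullet> grp_block grp g b"
  by (simp add: grp_block_def inner_vec_def) (rule sum.cong, auto)
lemma gb_inner2: "a \<bullet> grp_block grp g b = grp_block grp g a \<bullet> grp_block grp g b"
  by (metis gb_inner inner_commute)
lemma gb_sum: "(\<Sum>g\<in>UNIV. grp_block (grp::'p\<Rightarrow>'g::finite) g (v::real^'p)) = v"
  by (simp add: grp_block_def vec_eq_iff sum_component sum.delta')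

lemma small_t:
  fixes a b :: real
  assumes "b \<ge> 0" "\<And>t. 0 < t \<Longrightarrow> t \<le> 1 \<Longrightarrow> 0 \<le> a * t + b * t\<^sup>2"
  shows "a \<ge> 0"
proof (rule ccontr)
  assume "\<not> a \<ge> 0"
  hence a: "a < 0" by simp
  define t where "t = min 1 (-a / (b + 1))"
  have t0: "0 < t" using a assms(1) by (simp add: t_def divide_neg_pos)
  have t1: "t \<le> 1" by (simp add: t_def)
  have "t \<le> -a / (b+1)" by (simp add: t_def)
  hence "t * (b+1) \<le> -a" using assms(1) by (simp add: field_simps)
  hence "b * t < -a" using t0 by (simp add: algebra_simps)
  hence "a + b * t < 0" by simp
  hence "t * (a + b * t) < 0" using t0 by (simp add: mult_pos_neg)
  hence "a * t + b * t\<^sup>2 < 0" by (simp add: power2_eq_square algebra_simps)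
  with assms(2)[OF t0 t1] show False by simp
qed


lemma swap_helper: "(\<Sum>i\<in>UNIV. (a i::real) * (\<Sum>k\<in>UNIV. b i k * c k)) = (\<Sum>k\<in>UNIV. c k * (\<Sum>i\<in>UNIV. a i * b i k))"
proof -
  have "(\<Sum>i\<in>UNIV. a i * (\<Sum>k\<in>UNIV. b i k * c k)) = (\<Sum>i\<in>UNIV. \<Sum>k\<in>UNIV. c k * (a i * b i k))"
    by (simp add: sum_distrib_left mult_ac)
  also have "\<dots> = (\<Sum>k\<in>UNIV. \<Sum>i\<in>UNIV. c k * (a i * b i k))" by (rule sum.swap)
  also have "\<dots> = (\<Sum>k\<in>UNIV. c k * (\<Sum>i\<in>UNIV. a i * b i k))" by (simp add: sum_distrib_left)
  finally show ?thesis .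
qed

lemma orth_block:
  fixes X :: "real^'p^'n"
  assumes orth: "\<And>j k. grp j = grp k \<Longrightarrow> (\<Sum>i\<in>UNIV. X $ i $ j * X $ i $ k) = nn * (if j = k then 1 else 0)"
  shows "grp_block grp g (transpose X *v (X *v grp_block grp g w)) = nn *\<^sub>R grp_block grp g w"
proof -
  have "(\<Sum>i\<in>UNIV. X $ i $ j * (\<Sum>k\<in>UNIV. X $ i $ k * (if grp k = g then w $ k else 0))) = nn * w $ j"
    if "grp j = g" for j
  proof -
    have "(\<Sum>i\<in>UNIV. X $ i $ j * (\<Sum>k\<in>UNIV. X $ i $ k * (if grp k = g then w $ k else 0)))
        = (\<Sum>k\<in>UNIV. (if grp k = g then w $ k else 0) * (\<Sum>i\<in>UNIV. X $ i $ j * X $ i $ k))"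
      by (rule swap_helper)
    also have "\<dots> = (\<Sum>k\<in>UNIV. if k = j then nn * w $ j else 0)"
    proof (rule sum.cong)
      fix k :: 'p
      show "(if grp k = g then w $ k else 0) * (\<Sum>i\<in>UNIV. X $ i $ j * X $ i $ k) = (if k = j then nn * w $ j else 0)"
      proof (cases "grp k = g")
        case True
        then show ?thesis using orth[of j k] that by auto
      next
        case False
        then show ?thesis using that by auto
      qed
    qed simp
    also have "\<dots> = nn * w $ j" by simp
    finally show ?thesis .
  qed
  thus ?thesis
    by (simp add: grp_block_def vec_eq_iff matrix_vector_mult_def transpose_def)
qed

lemma orth_norm:
  fixes X :: "real^'p^'n"
  assumes orth: "\<And>j k. grp j = grp k \<Longrightarrow> (\<Sum>i\<in>UNIV. X $ i $ j * X $ i $ k) = nn * (if j = k then 1 else 0)"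
  shows "(norm (X *v grp_block grp g w))\<^sup>2 = nn * (norm (grp_block grp g w))\<^sup>2"
proof -
  have "(norm (X *v grp_block grp g w))\<^sup>2 = (X *v grp_block grp g w) \<bullet> (X *v grp_block grp g w)"
    by (simp add: power2_norm_eq_inner)
  also have "\<dots> = grp_block grp g w \<bullet> (transpose X *v (X *v grp_block grp g w))"
    by (rule mv_inner)
  also have "\<dots> = grp_block grp g w \<bullet> grp_block grp g (transpose X *v (X *v grp_block grp g w))"
    using gb_inner[where grp=grp and g=g and a=w and b="transpose X *v (X *v grp_block grp g w)"]
    by (simp add: gb_idem)
  also have "\<dots> = nn * (norm (grp_block grp g w))\<^sup>2"
    by (simp add: orth_block[OF orth] power2_norm_eq_inner)
  finally show ?thesis .
qed

lemma block_bound: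
  fixes X :: "real^'p^'n"
  assumes orth: "\<And>j k. grp j = grp k \<Longrightarrow> (\<Sum>i\<in>UNIV. X $ i $ j * X $ i $ k) = nn * (if j = k then 1 else 0)"
    and nn: "nn \<ge> 0"
  shows "norm (grp_block grp g (transpose X *v z)) \<le> sqrt nn * norm z"
proof -
  define w where "w = grp_block grp g (transpose X *v z)"
  have bw: "grp_block grp g w = w" by (simp add: w_def gb_idem)
  have nx: "norm (X *v w) = sqrt nn * norm w"
  proof -
    have "norm (X *v w) = sqrt ((norm (X *v w))\<^sup>2)" by simp
    also have "\<dots> = sqrt (nn * (norm w)\<^sup>2)" using orth_norm[where grp=grp and g=g and w=w and X=X and nn=nn, OF orth] bw by simp
    also have "\<dots> = sqrt nn * norm w" by (simp add: real_sqrt_mult)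
    finally show ?thesis .
  qed
  have "(norm w)\<^sup>2 = w \<bullet> (transpose X *v z)"
    using gb_inner[where grp=grp and g=g and a="transpose X *v z" and b="transpose X *v z"]
    by (simp add: w_def power2_norm_eq_inner)
  also have "\<dots> = (X *v w) \<bullet> z" by (simp add: mv_inner)
  also have "\<dots> \<le> norm (X *v w) * norm z" by (rule norm_cauchy_schwarz)
  also have "\<dots> = sqrt nn * norm z * norm w" by (simp add: nx)
  finally have h: "norm w * norm w \<le> (sqrt nn * norm z) * norm w" by (simp add: power2_eq_square)
  show ?thesis
  proof (cases "norm w = 0")
    case True thus ?thesis using w_def by (simp add: nn)
  next
    case False
    hence "norm w > 0" by simp
    with h show ?thesis unfolding w_def[symmetric] by (meson mult_le_cancel_right_pos)
  qed
qed


lemma obj_eq: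
  "group_lasso_obj X y grp lam b = (1 / (2 * real CARD('n))) * (norm (y - X *v b))\<^sup>2
     + lam * (\<Sum>g\<in>UNIV. sqrt (real (grp_size grp g)) * norm (grp_block grp g b))"
  for X :: "real^'p^'n" and grp :: "'p::finite \<Rightarrow> 'g::finite"
  unfolding group_lasso_obj_def by (simp add: mv_sum[symmetric] gb_sum)

lemma pen_pert:
  fixes grp :: "'p::finite \<Rightarrow> 'g::finite" and ws :: "'g \<Rightarrow> real"
  shows "(\<Sum>g\<in>UNIV. ws g * norm (grp_block grp g (b + t *\<^sub>R grp_block grp h v)))
     = (\<Sum>g\<in>UNIV. ws g * norm (grp_block grp g b))
       + ws h * (norm (grp_block grp h b + t *\<^sub>R grp_block grp h v) - norm (grp_block grp h b))"
proof -
  have "(\<Sum>g\<in>UNIV. ws g * norm (grp_block grp g (b + t *\<^sub>R grp_block grp h v)))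
      - (\<Sum>g\<in>UNIV. ws g * norm (grp_block grp g b))
      = (\<Sum>g\<in>UNIV. if g = h then ws h * (norm (grp_block grp h b + t *\<^sub>R grp_block grp h v) - norm (grp_block grp h b)) else 0)"
    unfolding sum_subtractf[symmetric]
    by (rule sum.cong) (auto simp: gb_add gb_scale gb_idem algebra_simps)
  also have "\<dots> = ws h * (norm (grp_block grp h b + t *\<^sub>R grp_block grp h v) - norm (grp_block grp h b))"
    by simp
  finally show ?thesis by simp
qed

lemma norm_diff_sq: "(norm (r - t *\<^sub>R q))\<^sup>2 = (norm r)\<^sup>2 - 2 * t * (r \<bullet> q) + t\<^sup>2 * (norm q)\<^sup>2"
  for r q :: "'a::real_inner"
  unfolding power2_norm_eq_inner
  by (simp add: inner_diff_left inner_diff_right inner_commute algebra_simps power2_eq_square)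

theorem theorem4p2:
  fixes X :: "real ^ 'p ^ 'n" and y :: "real ^ 'n" and grp :: "'p \<Rightarrow> 'g::finite"
    and gs :: 'g and lam :: real and \<beta> :: "real ^ 'p" and g :: 'g
  defines "n \<equiv> real CARD('n)"
  defines "lm \<equiv> lambda_max X y grp"
  defines "Ws \<equiv> real (grp_size grp gs)"
  defines "vbar \<equiv> X *v grp_block grp gs (transpose X *v y)"
  assumes y_centered: "(\<Sum>i\<in>UNIV. y $ i) = 0"
    and X_centered: "\<And>j. (\<Sum>i\<in>UNIV. X $ i $ j) = 0"
    and X_scaled: "\<And>j. (1 / n) * (\<Sum>i\<in>UNIV. (X $ i $ j)\<^sup>2) = 1"
    and groups_nonempty: "\<And>h. \<exists>j. grp j = h"
    and X_orth: "\<And>j k. grp j = grp k \<Longrightarrow>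
                  (1 / n) * (\<Sum>i\<in>UNIV. X $ i $ j * X $ i $ k) = (if j = k then 1 else 0)"
    and gs_max: "norm (grp_block grp gs (transpose X *v y)) / (n * sqrt Ws) = lm"
    and lam_pos: "0 < lam" and lam_le: "lam \<le> lm"
    and sol: "is_group_lasso_sol X y grp lam \<beta>"
    and rule: "sqrt ((lam + lm)\<^sup>2 * (norm (grp_block grp g (transpose X *v y)))\<^sup>2
                 - 2 * (lm\<^sup>2 - lam\<^sup>2) * (grp_block grp g (transpose X *v y) \<bullet> grp_block grp g (transpose X *v vbar)) / n
                 + (lm - lam)\<^sup>2 * (norm (grp_block grp g (transpose X *v vbar)))\<^sup>2 / n\<^sup>2)
               < 2 * n * lam * lm * sqrt (real (grp_size grp g))
                 - (lm - lam) * sqrt (n * (norm y)\<^sup>2 - n\<^sup>2 * lm\<^sup>2 * Ws)"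
  shows "grp_block grp g \<beta> = 0"
proof -
  let ?T = "\<lambda>z. transpose X *v z"
  let ?B = "\<lambda>h v. grp_block grp h v"
  define ws where "ws h = sqrt (real (grp_size grp h))" for h
  define r where "r = y - X *v \<beta>"
  have n_pos: "n > 0" by (simp add: n_def)
  have orth: "\<And>j k. grp j = grp k \<Longrightarrow> (\<Sum>i\<in>UNIV. X $ i $ j * X $ i $ k) = n * (if j = k then 1 else 0)"
  proof -
    fix j k assume "grp j = grp k"
    from X_orth[OF this] n_pos show "(\<Sum>i\<in>UNIV. X $ i $ j * X $ i $ k) = n * (if j = k then 1 else 0)"
      by (simp add: field_simps split: if_splits)
  qed
  have ws_pos: "ws h > 0" for h
  proof -
    obtain j where "grp j = h" using groups_nonempty by blast
    hence "{j. grp j = h} \<noteq> {}" by blast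
    hence "card {j. grp j = h} > 0" by (simp add: card_gt_0_iff)
    thus ?thesis by (simp add: ws_def grp_size_def)
  qed
  have n0: "0 \<le> n" using n_pos by simp
  have bb: "norm (?B h (?T z)) \<le> sqrt n * norm z" for h z
    by (rule block_bound[OF orth n0])
  have T_add: "?T (a + b) = ?T a + ?T b" for a b by (rule mv_add)
  have T_diff: "?T (a - b) = ?T a - ?T b" for a b by (rule mv_diff)
  have T_scale: "?T (c *\<^sub>R a) = c *\<^sub>R ?T a" for c a by (rule mv_scale)
  have pert: "0 \<le> (1 / (2 * n)) * (- 2 * t * (?B h (?T r) \<bullet> ?B h v) + t\<^sup>2 * (norm (X *v ?B h v))\<^sup>2)
        + lam * ws h * (norm (?B h \<beta> + t *\<^sub>R ?B h v) - norm (?B h \<beta>))" for h v t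
  proof -
    have "group_lasso_obj X y grp lam \<beta> \<le> group_lasso_obj X y grp lam (\<beta> + t *\<^sub>R ?B h v)"
      using sol unfolding is_group_lasso_sol_def by blast
    moreover have res: "y - X *v (\<beta> + t *\<^sub>R ?B h v) = r - t *\<^sub>R (X *v ?B h v)"
      by (simp add: r_def mv_add mv_scale)
    moreover have "r \<bullet> (X *v ?B h v) = ?B h (?T r) \<bullet> ?B h v"
      using gb_inner2[where a="?T r" and grp=grp and g=h and b=v] by (simp add: mv_inner)
    moreover have pp: "(\<Sum>g\<in>UNIV. sqrt (real (grp_size grp g)) * norm (?B g (\<beta> + t *\<^sub>R ?B h v)))
       = (\<Sum>g\<in>UNIV. sqrt (real (grp_size grp g)) * norm (?B g \<beta>))
         + ws h * (norm (?B h \<beta> + t *\<^sub>R ?B h v) - norm (?B h \<beta>))"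
      unfolding ws_def by (rule pen_pert)
    ultimately show ?thesis
      unfolding obj_eq res norm_diff_sq pp n_def[symmetric] r_def[symmetric]
      by (simp add: algebra_simps)
  qed
  have kkt1: "n * lam * ws h * norm (?B h \<beta>) \<le> ?B h (?T r) \<bullet> ?B h \<beta>" for h
  proof -
    let ?a = "?B h (?T r) \<bullet> ?B h \<beta> / n - lam * ws h * norm (?B h \<beta>)"
    let ?b = "(norm (X *v ?B h \<beta>))\<^sup>2 / (2 * n)"
    have b0: "?b \<ge> 0" using n_pos by simp
    have hh: "0 \<le> ?a * t + ?b * t\<^sup>2" if "0 < t" "t \<le> 1" for t
    proof -
      have e: "?B h \<beta> + (-t) *\<^sub>R ?B h \<beta> = (1 - t) *\<^sub>R ?B h \<beta>" by (simp add: algebra_simps)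
      have nn: "norm ((1 - t) *\<^sub>R ?B h \<beta>) = (1 - t) * norm (?B h \<beta>)" using that by simp
      have p: "0 \<le> (1 / (2 * n)) * (- 2 * (-t) * (?B h (?T r) \<bullet> ?B h \<beta>) + (-t)\<^sup>2 * (norm (X *v ?B h \<beta>))\<^sup>2)
        + lam * ws h * ((1 - t) * norm (?B h \<beta>) - norm (?B h \<beta>))"
        using pert[where h=h and v=\<beta> and t="-t"] unfolding e nn .
      have "(1 / (2 * n)) * (- 2 * (-t) * (?B h (?T r) \<bullet> ?B h \<beta>) + (-t)\<^sup>2 * (norm (X *v ?B h \<beta>))\<^sup>2)
        + lam * ws h * ((1 - t) * norm (?B h \<beta>) - norm (?B h \<beta>)) = ?a * t + ?b * t\<^sup>2"
        using n_pos by (simp add: field_simps power2_eq_square)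
      with p show ?thesis by linarith
    qed
    from small_t[OF b0 hh] have "?a \<ge> 0" by simp
    thus ?thesis using n_pos by (simp add: field_simps)
  qed
  have kkt2: "norm (?B h (?T r)) \<le> n * lam * ws h" for h
  proof -
    define vv where "vv = ?B h (?T r)"
    have bvv: "?B h vv = vv" by (simp add: vv_def gb_idem)
    let ?a = "- (norm vv)\<^sup>2 / n + lam * ws h * norm vv"
    let ?b = "(norm (X *v vv))\<^sup>2 / (2 * n)"
    have b0: "?b \<ge> 0" using n_pos by simp
    have hh: "0 \<le> ?a * t + ?b * t\<^sup>2" if "0 < t" "t \<le> 1" for t
    proof -
      have tri: "norm (?B h \<beta> + t *\<^sub>R vv) - norm (?B h \<beta>) \<le> t * norm vv"
        using norm_triangle_ineq[of "?B h \<beta>" "t *\<^sub>R vv"] that by simp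
      have tl: "lam * ws h * (norm (?B h \<beta> + t *\<^sub>R vv) - norm (?B h \<beta>)) \<le> lam * ws h * (t * norm vv)"
        using tri lam_pos ws_pos[of h] by (simp add: mult_left_mono)
      have p: "0 \<le> (1 / (2 * n)) * (- 2 * t * (vv \<bullet> vv) + t\<^sup>2 * (norm (X *v vv))\<^sup>2)
        + lam * ws h * (norm (?B h \<beta> + t *\<^sub>R vv) - norm (?B h \<beta>))"
        using pert[where h=h and v="?T r" and t=t] unfolding vv_def[symmetric] bvv .
      have "(1 / (2 * n)) * (- 2 * t * (vv \<bullet> vv) + t\<^sup>2 * (norm (X *v vv))\<^sup>2) + lam * ws h * (t * norm vv)
         = ?a * t + ?b * t\<^sup>2"
      proof -
        have vvsq: "vv \<bullet> vv = (norm vv)\<^sup>2" by (simp add: power2_norm_eq_inner)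
        show ?thesis unfolding vvsq using n_pos by (simp add: field_simps power2_eq_square)
      qed
      with p tl show ?thesis by linarith
    qed
    from small_t[OF b0 hh] have a0: "?a \<ge> 0" by simp
    show ?thesis
    proof (cases "norm vv = 0")
      case True thus ?thesis using ws_pos[of h] lam_pos n_pos vv_def by simp
    next
      case False
      hence "norm vv > 0" by simp
      from a0 have "(norm vv)\<^sup>2 \<le> n * lam * ws h * norm vv" using n_pos by (simp add: field_simps)
      hence "norm vv * norm vv \<le> (n * lam * ws h) * norm vv" by (simp add: power2_eq_square)
      with \<open>norm vv > 0\<close> show ?thesis unfolding vv_def by (meson mult_le_cancel_right_pos)
    qed
  qed
  have split: "(X *v \<beta>) \<bullet> z = (\<Sum>h\<in>UNIV. ?B h \<beta> \<bullet> ?B h (?T z))" for z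
  proof -
    have "(X *v \<beta>) \<bullet> z = \<beta> \<bullet> ?T z" by (rule mv_inner)
    also have "\<dots> = (\<Sum>h\<in>UNIV. ?B h \<beta>) \<bullet> ?T z" by (simp add: gb_sum)
    also have "\<dots> = (\<Sum>h\<in>UNIV. ?B h \<beta> \<bullet> ?T z)" by (rule inner_sum_left)
    also have "\<dots> = (\<Sum>h\<in>UNIV. ?B h \<beta> \<bullet> ?B h (?T z))" by (intro sum.cong refl gb_inner)
    finally show ?thesis .
  qed
  have vi: "n * lam * ((X *v \<beta>) \<bullet> z) \<le> (X *v \<beta>) \<bullet> r" if feas: "\<And>h. norm (?B h (?T z)) \<le> ws h" for z
  proof -
    have "(X *v \<beta>) \<bullet> z \<le> (\<Sum>h\<in>UNIV. ws h * norm (?B h \<beta>))"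
      unfolding split
    proof (rule sum_mono)
      fix h
      have "?B h \<beta> \<bullet> ?B h (?T z) \<le> norm (?B h \<beta>) * norm (?B h (?T z))" by (rule norm_cauchy_schwarz)
      also have "\<dots> \<le> norm (?B h \<beta>) * ws h" using feas[of h] by (simp add: mult_left_mono)
      finally show "?B h \<beta> \<bullet> ?B h (?T z) \<le> ws h * norm (?B h \<beta>)" by (simp add: mult.commute)
    qed
    hence "n * lam * ((X *v \<beta>) \<bullet> z) \<le> n * lam * (\<Sum>h\<in>UNIV. ws h * norm (?B h \<beta>))"
      using n_pos lam_pos by (simp add: mult_left_mono)
    also have "\<dots> = (\<Sum>h\<in>UNIV. n * lam * ws h * norm (?B h \<beta>))" by (simp add: sum_distrib_left mult_ac)
    also have "\<dots> \<le> (\<Sum>h\<in>UNIV. ?B h \<beta> \<bullet> ?B h (?T r))"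
      by (rule sum_mono) (use kkt1 in \<open>simp add: inner_commute\<close>)
    also have "\<dots> = (X *v \<beta>) \<bullet> r" by (rule split[symmetric])
    finally show ?thesis .
  qed
  have lm_pos: "lm > 0" using lam_pos lam_le by simp
  have lmax: "norm (?B h (?T y)) \<le> lm * n * ws h" for h
  proof -
    have "norm (?B h (?T y)) / (n * ws h) \<le> lm"
      unfolding lm_def lambda_max_def n_def ws_def by (rule Max_ge) auto
    thus ?thesis using n_pos ws_pos[of h] by (simp add: field_simps)
  qed
  have Xb: "X *v \<beta> = y - r" by (simp add: r_def)
  have star: "lam * ((y - r) \<bullet> y) \<le> lm * ((y - r) \<bullet> r)"
  proof -
    define zm where "zm = (1 / (n * lm)) *\<^sub>R y"
    have "norm (?B h (?T zm)) \<le> ws h" for h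
    proof -
      have "norm (?B h (?T zm)) = norm (?B h (?T y)) / (n * lm)"
        using n_pos lm_pos by (simp add: zm_def T_scale gb_scale)
      also have "\<dots> \<le> ws h" using lmax[of h] n_pos lm_pos by (simp add: field_simps)
      finally show ?thesis .
    qed
    from vi[OF this] have "n * lam * ((y - r) \<bullet> zm) \<le> (y - r) \<bullet> r" unfolding Xb .
    moreover have "n * lam * ((y - r) \<bullet> zm) = lam / lm * ((y - r) \<bullet> y)"
      using n_pos lm_pos by (simp add: zm_def)
    ultimately have "lam / lm * ((y - r) \<bullet> y) \<le> (y - r) \<bullet> r" by simp
    thus ?thesis using lm_pos by (simp add: field_simps)
  qed
  define K where "K = norm (?B gs (?T y))"
  have wsgs: "ws gs = sqrt Ws" by (simp add: ws_def Ws_def)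
  have K_eq: "K = lm * n * ws gs"
    using gs_max n_pos ws_pos[of gs] unfolding K_def wsgs by (simp add: field_simps)
  have vbar_inner: "z \<bullet> vbar = ?B gs (?T z) \<bullet> ?B gs (?T y)" for z
  proof -
    have "z \<bullet> vbar = ?B gs (?T y) \<bullet> ?T z" unfolding vbar_def by (simp add: inner_commute mv_inner)
    also have "\<dots> = ?B gs (?T y) \<bullet> ?B gs (?T z)" by (rule gb_inner)
    finally show ?thesis by (simp add: inner_commute)
  qed
  have yv: "y \<bullet> vbar = K\<^sup>2" unfolding vbar_inner K_def by (simp add: power2_norm_eq_inner)
  have starstar: "lm * (r \<bullet> vbar) \<le> lam * (y \<bullet> vbar)"
  proof -
    have "r \<bullet> vbar \<le> norm (?B gs (?T r)) * K" unfolding vbar_inner K_def by (rule norm_cauchy_schwarz)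
    also have "\<dots> \<le> n * lam * ws gs * K" using kkt2[of gs] by (simp add: K_def mult_right_mono)
    finally have "lm * (r \<bullet> vbar) \<le> lm * (n * lam * ws gs * K)" using lm_pos by simp
    also have "\<dots> = lam * K\<^sup>2" by (simp add: K_eq power2_eq_square)
    finally show ?thesis by (simp add: yv)
  qed
  define Py where "Py = (1 / n) *\<^sub>R vbar"
  define U where "U = lm *\<^sub>R r - lam *\<^sub>R y"
  define D where "D = (lm - lam) *\<^sub>R (y - Py)"
  define c where "c = (lam + lm) *\<^sub>R y - (lm - lam) *\<^sub>R Py"
  have UD: "U - D = (- lm) *\<^sub>R (y - r) + (lm - lam) *\<^sub>R Py"
    by (simp add: U_def D_def algebra_simps)
  have Uyr: "U \<bullet> (y - r) \<ge> 0"
  proof -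
    have "U \<bullet> (y - r) = lm * ((y - r) \<bullet> r) - lam * ((y - r) \<bullet> y)"
      by (simp add: U_def inner_diff_left inner_diff_right algebra_simps inner_commute)
    thus ?thesis using star by simp
  qed
  have UPy: "U \<bullet> Py \<le> 0"
  proof -
    have "U \<bullet> Py = (1 / n) * (lm * (r \<bullet> vbar) - lam * (y \<bullet> vbar))"
      by (simp add: U_def Py_def inner_diff_left algebra_simps)
    thus ?thesis using starstar n_pos by (simp add: divide_nonpos_pos)
  qed
  have UUD: "U \<bullet> (U - D) \<le> 0"
  proof -
    have "U \<bullet> (U - D) = - lm * (U \<bullet> (y - r)) + (lm - lam) * (U \<bullet> Py)"
      unfolding UD by (simp only: inner_add_right inner_scaleR_right)
    moreover have "- lm * (U \<bullet> (y - r)) \<le> 0" using lm_pos Uyr by simp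
    moreover have "(lm - lam) * (U \<bullet> Py) \<le> 0" using lam_le UPy by (simp add: mult_nonneg_nonpos)
    ultimately show ?thesis by linarith
  qed
  have n2: "norm (2 *\<^sub>R U - D) \<le> norm D"
  proof (rule power2_le_imp_le)
    have "(norm (2 *\<^sub>R U - D))\<^sup>2 = 4 * (U \<bullet> (U - D)) + (norm D)\<^sup>2"
      unfolding power2_norm_eq_inner by (simp add: inner_diff_left inner_diff_right inner_commute algebra_simps)
    thus "(norm (2 *\<^sub>R U - D))\<^sup>2 \<le> (norm D)\<^sup>2" using UUD by simp
  qed simp
  have rc: "(2 * lm) *\<^sub>R r = c + (2 *\<^sub>R U - D)"
    by (simp add: c_def U_def D_def vec_eq_iff algebra_simps)
  have main1: "2 * lm * norm (?B g (?T r)) \<le> norm (?B g (?T c)) + sqrt n * norm D"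
  proof -
    have "2 * lm * norm (?B g (?T r)) = norm (?B g (?T ((2 * lm) *\<^sub>R r)))"
      using lm_pos by (simp add: T_scale gb_scale)
    also have "\<dots> = norm (?B g (?T c) + ?B g (?T (2 *\<^sub>R U - D)))"
      unfolding rc T_add gb_add ..
    also have "\<dots> \<le> norm (?B g (?T c)) + norm (?B g (?T (2 *\<^sub>R U - D)))" by (rule norm_triangle_ineq)
    also have "\<dots> \<le> norm (?B g (?T c)) + sqrt n * norm (2 *\<^sub>R U - D)" using bb by simp
    also have "\<dots> \<le> norm (?B g (?T c)) + sqrt n * norm D" using n2 by (simp add: mult_left_mono n0)
    finally show ?thesis .
  qed
  have Dterm: "sqrt n * norm D = (lm - lam) * sqrt (n * (norm y)\<^sup>2 - n\<^sup>2 * lm\<^sup>2 * Ws)"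
  proof -
    have K2: "K\<^sup>2 = n\<^sup>2 * lm\<^sup>2 * Ws"
      using ws_pos[of gs] by (simp add: K_eq wsgs power_mult_distrib)
    have vv: "vbar \<bullet> vbar = n * K\<^sup>2"
      using orth_norm[where grp=grp and g=gs and w="?T y" and X=X and nn=n, OF orth]
      unfolding vbar_def K_def by (simp add: power2_norm_eq_inner)
    have yy: "y \<bullet> y = norm y * norm y" by (metis power2_eq_square power2_norm_eq_inner)
    have "(norm (y - Py))\<^sup>2 = y \<bullet> y - 2 * (y \<bullet> Py) + Py \<bullet> Py"
      unfolding power2_norm_eq_inner by (simp add: inner_diff_left inner_diff_right inner_commute)
    also have "\<dots> = (norm y)\<^sup>2 - K\<^sup>2 / n"
      using n_pos yy by (simp add: Py_def yv vv field_simps power2_eq_square)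
    finally have "n * (norm (y - Py))\<^sup>2 = n * (norm y)\<^sup>2 - K\<^sup>2"
      using n_pos by (simp add: field_simps)
    hence "n * (norm (y - Py))\<^sup>2 = n * (norm y)\<^sup>2 - n\<^sup>2 * lm\<^sup>2 * Ws" unfolding K2 .
    hence "sqrt (n * (norm y)\<^sup>2 - n\<^sup>2 * lm\<^sup>2 * Ws) = sqrt n * norm (y - Py)"
      using n_pos by (metis norm_ge_zero real_sqrt_abs abs_of_nonneg real_sqrt_mult real_sqrt_power)
    thus ?thesis using lam_le by (simp add: D_def)
  qed
  have Cterm: "norm (?B g (?T c)) = sqrt ((lam + lm)\<^sup>2 * (norm (grp_block grp g (transpose X *v y)))\<^sup>2
                 - 2 * (lm\<^sup>2 - lam\<^sup>2) * (grp_block grp g (transpose X *v y) \<bullet> grp_block grp g (transpose X *v vbar)) / n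
                 + (lm - lam)\<^sup>2 * (norm (grp_block grp g (transpose X *v vbar)))\<^sup>2 / n\<^sup>2)"
  proof -
    define a where "a = ?B g (?T y)"
    define bv where "bv = ?B g (?T vbar)"
    have "?B g (?T c) = (lam + lm) *\<^sub>R a - ((lm - lam) / n) *\<^sub>R bv"
      by (simp add: c_def Py_def a_def bv_def T_diff T_scale gb_diff gb_scale)
    moreover have "(norm ((lam + lm) *\<^sub>R a - ((lm - lam) / n) *\<^sub>R bv))\<^sup>2 = (lam + lm)\<^sup>2 * (norm a)\<^sup>2 - 2 * (lm\<^sup>2 - lam\<^sup>2) * (a \<bullet> bv) / n
                 + (lm - lam)\<^sup>2 * (norm bv)\<^sup>2 / n\<^sup>2"
    proof -
      have g: "(norm (s1 *\<^sub>R a - s2 *\<^sub>R bv))\<^sup>2 = s1\<^sup>2 * (norm a)\<^sup>2 - 2 * s1 * s2 * (a \<bullet> bv) + s2\<^sup>2 * (norm bv)\<^sup>2" for s1 s2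
        unfolding power2_norm_eq_inner
        by (simp add: inner_diff_left inner_diff_right inner_commute power2_eq_square)
      show ?thesis unfolding g using n_pos by (simp add: field_simps power2_eq_square)
    qed
    ultimately have "(norm (?B g (?T c)))\<^sup>2 = (lam + lm)\<^sup>2 * (norm a)\<^sup>2 - 2 * (lm\<^sup>2 - lam\<^sup>2) * (a \<bullet> bv) / n
                 + (lm - lam)\<^sup>2 * (norm bv)\<^sup>2 / n\<^sup>2" by simp
    thus ?thesis unfolding a_def bv_def by (metis norm_ge_zero real_sqrt_unique)
  qed
  have lt: "norm (?B g (?T r)) < n * lam * ws g"
  proof -
    have "2 * lm * norm (?B g (?T r)) < 2 * n * lam * lm * ws g"
      using main1 rule unfolding Cterm[symmetric] Dterm[symmetric] ws_def by simp
    thus ?thesis using lm_pos by (simp add: field_simps)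
  qed
  show ?thesis
  proof (rule ccontr)
    assume ne: "?B g \<beta> \<noteq> 0"
    hence np: "norm (?B g \<beta>) > 0" by simp
    have "n * lam * ws g * norm (?B g \<beta>) \<le> norm (?B g (?T r)) * norm (?B g \<beta>)"
      using kkt1[of g] norm_cauchy_schwarz[of "?B g (?T r)" "?B g \<beta>"] by linarith
    hence "n * lam * ws g \<le> norm (?B g (?T r))" using np by simp
    with lt show False by simp
  qed
qed
end
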